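(* Let $\mathcal{E}$ be a finite labeled prime event structure. Then $\mathcal{L}(\mathcal{E})=\mathcal{L}(\mathcal{A}^{\mathcal{E}})$.
   Context: A finite $\mathcal{X}$-labeled prime event structure is $\mathcal{E}=\langle E,<,\#,h\rangle$ with finite $E$, strict partial order $<$, labeling $h:E\to\mathcal{X}$, and symmetric irreflexive conflict relation $\#$ closed under $<$ (if $e\#e'$ and $e'<e''$ then $e\#e''$); $\mathcal{X}$ contains $\varepsilon$ denoting the empty word; there is an event $\bot$ below all other events with $h(\bot)=\varepsilon$. A configuration is a left-closed, conflict-free subset of $E$; maximal if no configuration strictly contains it. A trace of a configuration lists each of its events exactly once respecting $<$; $\mathcal{L}(\mathcal{E})$ is the set of words $h(t)$ (pointwise, $\varepsilon$ omitted) for traces $t$ of maximal configurations. The automaton encoding is the NFA $\mathcal{A}^{\mathcal{E}}=\langle Q^{\mathcal{E}},\mathcal{X},\delta^{\mathcal{E}},q_0,F\rangle$ with $Q^{\mathcal{E}}=\{q_C\mid C$ a configuration of $\mathcal{E}\}$, $(q_{C_1},\sigma,q_{C_2})\in\delta^{\mathcal{E}}$ iff there is $e\in E$ with $C_1\cup\{e\}=C_2$ and $h(e)=\sigma$ (transitions labeled $\varepsilon$ are $\varepsilon$-moves), $q_0=q_{\{\bot\}}$, and $F=\{q_C\mid C$ maximal$\}$; $\mathcal{L}(\mathcal{A}^{\mathcal{E}})$ is its accepted language. *)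

theory Defs
  imports Main
begin

text \<open>An event structure is given by a set of events E, a causality relation lt
(the strict partial order <), a conflict relation cf (#), a labelling h into the
alphabet 'x, a distinguished label eps (the empty word) and a bottom event botE.\<close>

definition pes ::
  "'e set \<Rightarrow> ('e \<Rightarrow> 'e \<Rightarrow> bool) \<Rightarrow> ('e \<Rightarrow> 'e \<Rightarrow> bool) \<Rightarrow> ('e \<Rightarrow> 'x) \<Rightarrow> 'x \<Rightarrow> 'e \<Rightarrow> bool"
where
  "pes E lt cf h eps botE \<longleftrightarrow>
     finite E
   \<and> (\<forall>e e'. lt e e' \<longrightarrow> e \<in> E \<and> e' \<in> E)
   \<and> (\<forall>e. \<not> lt e e)
   \<and> (\<forall>e1 e2 e3. lt e1 e2 \<longrightarrow> lt e2 e3 \<longrightarrow> lt e1 e3)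
   \<and> (\<forall>e e'. cf e e' \<longrightarrow> e \<in> E \<and> e' \<in> E)
   \<and> (\<forall>e e'. cf e e' \<longrightarrow> cf e' e)
   \<and> (\<forall>e. \<not> cf e e)
   \<and> (\<forall>e e' e''. cf e e' \<longrightarrow> lt e' e'' \<longrightarrow> cf e e'')
   \<and> botE \<in> E
   \<and> (\<forall>e\<in>E. e \<noteq> botE \<longrightarrow> lt botE e)
   \<and> h botE = eps"

definition config :: "'e set \<Rightarrow> ('e \<Rightarrow> 'e \<Rightarrow> bool) \<Rightarrow> ('e \<Rightarrow> 'e \<Rightarrow> bool) \<Rightarrow> 'e set \<Rightarrow> bool" where
  "config E lt cf C \<longleftrightarrow> C \<subseteq> E
     \<and> (\<forall>e\<in>C. \<forall>e'. lt e' e \<longrightarrow> e' \<in> C)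
     \<and> (\<forall>e\<in>C. \<forall>e'\<in>C. \<not> cf e e')"

definition max_config :: "'e set \<Rightarrow> ('e \<Rightarrow> 'e \<Rightarrow> bool) \<Rightarrow> ('e \<Rightarrow> 'e \<Rightarrow> bool) \<Rightarrow> 'e set \<Rightarrow> bool" where
  "max_config E lt cf C \<longleftrightarrow> config E lt cf C \<and> \<not> (\<exists>C'. config E lt cf C' \<and> C \<subset> C')"

definition is_trace :: "('e \<Rightarrow> 'e \<Rightarrow> bool) \<Rightarrow> 'e set \<Rightarrow> 'e list \<Rightarrow> bool" where
  "is_trace lt C t \<longleftrightarrow> distinct t \<and> set t = C
     \<and> (\<forall>i<length t. \<forall>j<length t. lt (t ! i) (t ! j) \<longrightarrow> i < j)"

definition word_of :: "('e \<Rightarrow> 'x) \<Rightarrow> 'x \<Rightarrow> 'e list \<Rightarrow> 'x list" where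
  "word_of h eps t = filter (\<lambda>a. a \<noteq> eps) (map h t)"

definition pes_lang ::
  "'e set \<Rightarrow> ('e \<Rightarrow> 'e \<Rightarrow> bool) \<Rightarrow> ('e \<Rightarrow> 'e \<Rightarrow> bool) \<Rightarrow> ('e \<Rightarrow> 'x) \<Rightarrow> 'x \<Rightarrow> 'x list set" where
  "pes_lang E lt cf h eps =
     {word_of h eps t | t C. max_config E lt cf C \<and> is_trace lt C t}"

inductive nfa_run :: "('q \<times> 'x \<times> 'q) set \<Rightarrow> 'x \<Rightarrow> 'q \<Rightarrow> 'x list \<Rightarrow> 'q \<Rightarrow> bool"
  for delta :: "('q \<times> 'x \<times> 'q) set" and eps :: 'x where
  run_nil: "nfa_run delta eps q [] q"
| run_step: "(q, a, q') \<in> delta \<Longrightarrow> nfa_run delta eps q' w q''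
     \<Longrightarrow> nfa_run delta eps q (if a = eps then w else a # w) q''"

text \<open>Language of the NFA (Q, delta, q0, F); all states involved lie in Q by construction
of delta below.\<close>
definition nfa_lang :: "'q set \<Rightarrow> ('q \<times> 'x \<times> 'q) set \<Rightarrow> 'q \<Rightarrow> 'q set \<Rightarrow> 'x \<Rightarrow> 'x list set" where
  "nfa_lang Q delta q0 F eps = {w. \<exists>q\<in>F. nfa_run delta eps q0 w q}"

definition enc_states :: "'e set \<Rightarrow> ('e \<Rightarrow> 'e \<Rightarrow> bool) \<Rightarrow> ('e \<Rightarrow> 'e \<Rightarrow> bool) \<Rightarrow> 'e set set" where
  "enc_states E lt cf = {C. config E lt cf C}"

definition enc_delta ::
  "'e set \<Rightarrow> ('e \<Rightarrow> 'e \<Rightarrow> bool) \<Rightarrow> ('e \<Rightarrow> 'e \<Rightarrow> bool) \<Rightarrow> ('e \<Rightarrow> 'x) \<Rightarrow> ('e set \<times> 'x \<times> 'e set) set" where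
  "enc_delta E lt cf h = {(C1, a, C2). config E lt cf C1 \<and> config E lt cf C2
      \<and> (\<exists>e\<in>E. e \<notin> C1 \<and> C1 \<union> {e} = C2 \<and> h e = a)}"

definition enc_final :: "'e set \<Rightarrow> ('e \<Rightarrow> 'e \<Rightarrow> bool) \<Rightarrow> ('e \<Rightarrow> 'e \<Rightarrow> bool) \<Rightarrow> 'e set set" where
  "enc_final E lt cf = {C. max_config E lt cf C}"

definition enc_lang ::
  "'e set \<Rightarrow> ('e \<Rightarrow> 'e \<Rightarrow> bool) \<Rightarrow> ('e \<Rightarrow> 'e \<Rightarrow> bool) \<Rightarrow> ('e \<Rightarrow> 'x) \<Rightarrow> 'x \<Rightarrow> 'e \<Rightarrow> 'x list set" where
  "enc_lang E lt cf h eps botE =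
     nfa_lang (enc_states E lt cf) (enc_delta E lt cf h) {botE} (enc_final E lt cf) eps"

end

theory Submission
  imports Defs
begin

lemma prefix_config:
  assumes c: "config E lt cf C" and tr: "is_trace lt C (s @ t)"
  shows "config E lt cf (set s)"
proof -
  have sC: "set s \<subseteq> C" using tr unfolding is_trace_def by auto
  have lc: "e' \<in> set s" if es: "e \<in> set s" and "lt e' e" for e e'
  proof -
    obtain i where i: "i < length s" "s ! i = e" using es unfolding in_set_conv_nth by blast
    have "e \<in> C" using sC that(1) by auto
    then have "e' \<in> C" using c that(2) unfolding config_def by auto
    then have e'st: "e' \<in> set (s @ t)" using tr unfolding is_trace_def by simp
    obtain j where j: "j < length (s @ t)" "(s @ t) ! j = e'"
      using e'st unfolding in_set_conv_nth by blast
    have ei: "(s @ t) ! i = e" using i by (simp add: nth_append)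
    have "j < i" using tr j ei i that(2) unfolding is_trace_def by auto
    then show ?thesis using j i by (auto simp: nth_append)
  qed
  show ?thesis using c sC lc unfolding config_def by blast
qed

lemma word_of_Cons: "word_of h eps (x # t) = (if h x = eps then word_of h eps t else h x # word_of h eps t)"
  by (simp add: word_of_def)

lemma run_suffix:
  assumes c: "config E lt cf C"
  shows "is_trace lt C (s @ t) \<Longrightarrow> nfa_run (enc_delta E lt cf h) eps (set s) (word_of h eps t) C"
proof (induction t arbitrary: s)
  case Nil
  then have "set s = C" unfolding is_trace_def by auto
  then show ?case by (simp add: word_of_def run_nil)
next
  case (Cons x t)
  have tr2: "is_trace lt C ((s @ [x]) @ t)" using Cons.prems by simp
  have IH: "nfa_run (enc_delta E lt cf h) eps (set (s @ [x])) (word_of h eps t) C"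
    using Cons.IH tr2 by blast
  have c1: "config E lt cf (set s)" using prefix_config[OF c Cons.prems] .
  have c2: "config E lt cf (set (s @ [x]))" using prefix_config[OF c tr2] .
  have xE: "x \<in> E" using c2 unfolding config_def by auto
  have xs: "x \<notin> set s" using Cons.prems unfolding is_trace_def by auto
  have "(set s, h x, set (s @ [x])) \<in> enc_delta E lt cf h"
    unfolding enc_delta_def using c1 c2 xE xs by auto
  from run_step[OF this IH] show ?case by (simp add: word_of_Cons)
qed

lemma run_trace:
  assumes "nfa_run (enc_delta E lt cf h) eps D w C" and irr: "\<And>e. \<not> lt e e"
  shows "is_trace lt D s \<Longrightarrow> \<exists>t. is_trace lt C (s @ t) \<and> word_of h eps (s @ t) = word_of h eps s @ w"
  using assms(1)
proof (induction arbitrary: s rule: nfa_run.induct)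
  case (run_nil q)
  then show ?case by (rule_tac x="[]" in exI) simp
next
  case (run_step q a q' w q'')
  obtain e where e: "config E lt cf q" "config E lt cf q'" "e \<in> E" "e \<notin> q" "q \<union> {e} = q'" "h e = a"
    using run_step.hyps(1) unfolding enc_delta_def by auto
  have tr: "is_trace lt q' (s @ [e])"
    unfolding is_trace_def
  proof (intro conjI allI impI)
    show "distinct (s @ [e])" using run_step.prems e unfolding is_trace_def by auto
    show "set (s @ [e]) = q'" using run_step.prems e unfolding is_trace_def by auto
  next
    fix i j assume ij: "i < length (s @ [e])" "j < length (s @ [e])" "lt ((s @ [e]) ! i) ((s @ [e]) ! j)"
    show "i < j"
    proof (cases "i < length s")
      case True
      show ?thesis
      proof (cases "j < length s")
        case True
        with \<open>i < length s\<close> ij run_step.prems show ?thesis unfolding is_trace_def by (auto simp: nth_append)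
      next
        case False
        then show ?thesis using True ij by simp
      qed
    next
      case False
      then have i: "i = length s" using ij by simp
      show ?thesis
      proof (cases "j < length s")
        case True
        then have "s ! j \<in> q" using run_step.prems unfolding is_trace_def by auto
        moreover have "lt e (s ! j)" using ij i True by (simp add: nth_append)
        ultimately have "e \<in> q" using e(1) unfolding config_def by auto
        then show ?thesis using e by simp
      next
        case False
        then have "j = length s" using ij by simp
        then show ?thesis using ij i irr by simp
      qed
    qed
  qed
  obtain t where t: "is_trace lt q'' ((s @ [e]) @ t)" "word_of h eps ((s @ [e]) @ t) = word_of h eps (s @ [e]) @ w"
    using run_step.IH[OF tr] by blast
  show ?case
    apply (rule exI[of _ "e # t"])
    using t e by (simp add: word_of_def)
qed

theorem lemma5:
  fixes E :: "'e set" and lt cf :: "'e \<Rightarrow> 'e \<Rightarrow> bool"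
    and h :: "'e \<Rightarrow> 'x" and eps :: 'x and botE :: 'e
  assumes "pes E lt cf h eps botE"
  shows "pes_lang E lt cf h eps = enc_lang E lt cf h eps botE"
proof -
  have irr: "\<And>e. \<not> lt e e" and tr3: "\<And>e1 e2 e3. lt e1 e2 \<Longrightarrow> lt e2 e3 \<Longrightarrow> lt e1 e3"
    and ltE: "\<And>e e'. lt e e' \<Longrightarrow> e \<in> E \<and> e' \<in> E"
    and cfirr: "\<And>e. \<not> cf e e" and bE: "botE \<in> E"
    and bl: "\<And>e. e \<in> E \<Longrightarrow> e \<noteq> botE \<Longrightarrow> lt botE e" and hb: "h botE = eps"
    using assms unfolding pes_def by blast+
  have bconf: "config E lt cf {botE}"
    unfolding config_def
  proof (intro conjI ballI allI impI)
    show "{botE} \<subseteq> E" using bE by simp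
  next
    fix e e' assume "e \<in> {botE}" "lt e' e"
    then have "lt e' botE" by simp
    moreover have "e' \<noteq> botE" using irr calculation by auto
    ultimately have "lt botE botE" using bl ltE tr3 by blast
    then show "e' \<in> {botE}" using irr by blast
  next
    fix e e' assume "e \<in> {botE}" "e' \<in> {botE}"
    then show "\<not> cf e e'" using cfirr by simp
  qed
  have bot_in: "botE \<in> C" if "max_config E lt cf C" for C
  proof (rule ccontr)
    assume nb: "botE \<notin> C"
    have cC: "config E lt cf C" using that unfolding max_config_def by auto
    have "C = {}"
    proof (rule ccontr)
      assume "C \<noteq> {}"
      then obtain e where "e \<in> C" by auto
      then have "e \<in> E" "e \<noteq> botE" using cC nb unfolding config_def by auto
      then have "lt botE e" using bl by auto
      then show False using cC \<open>e \<in> C\<close> nb unfolding config_def by auto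
    qed
    then show False using that bconf unfolding max_config_def by auto
  qed
  show ?thesis
  proof
    show "pes_lang E lt cf h eps \<subseteq> enc_lang E lt cf h eps botE"
    proof
      fix w assume "w \<in> pes_lang E lt cf h eps"
      then obtain t C where w: "w = word_of h eps t" and mc: "max_config E lt cf C" and tr: "is_trace lt C t"
        unfolding pes_lang_def by auto
      have cC: "config E lt cf C" using mc unfolding max_config_def by auto
      have "botE \<in> set t" using bot_in[OF mc] tr unfolding is_trace_def by auto
      then obtain i where i: "i < length t" "t ! i = botE" by (auto simp: in_set_conv_nth)
      have t0: "t ! 0 = botE"
      proof (rule ccontr)
        assume ne: "t ! 0 \<noteq> botE"
        have "0 < length t" using i(1) by linarith
        then have "t ! 0 \<in> set t" by (rule nth_mem)
        then have "t ! 0 \<in> C" using tr unfolding is_trace_def by simp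
        then have "t ! 0 \<in> E" using cC unfolding config_def by auto
        then have "lt botE (t ! 0)" using bl ne by auto
        moreover have "\<forall>i<length t. \<forall>j<length t. lt (t ! i) (t ! j) \<longrightarrow> i < j"
          using tr unfolding is_trace_def by blast
        ultimately have "i < 0" using i by (metis length_greater_0_conv length_pos_if_in_set nth_mem)
        then show False by simp
      qed
      have tt: "t = [botE] @ tl t" using t0 i by (cases t) auto
      have "nfa_run (enc_delta E lt cf h) eps (set [botE]) (word_of h eps (tl t)) C"
        using run_suffix[OF cC] tr tt by metis
      moreover have "word_of h eps t = word_of h eps (tl t)"
        using tt hb by (metis append_Cons append_Nil word_of_Cons)
      ultimately show "w \<in> enc_lang E lt cf h eps botE"
        unfolding enc_lang_def nfa_lang_def enc_final_def using mc w by auto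
    qed
  next
    show "enc_lang E lt cf h eps botE \<subseteq> pes_lang E lt cf h eps"
    proof
      fix w assume "w \<in> enc_lang E lt cf h eps botE"
      then obtain C where mc: "max_config E lt cf C" and r: "nfa_run (enc_delta E lt cf h) eps {botE} w C"
        unfolding enc_lang_def nfa_lang_def enc_final_def by auto
      have "is_trace lt {botE} [botE]" unfolding is_trace_def using irr by auto
      then obtain t where t: "is_trace lt C ([botE] @ t)" "word_of h eps ([botE] @ t) = word_of h eps [botE] @ w"
        using run_trace[OF r irr] by blast
      have "word_of h eps [botE] = []" using hb by (simp add: word_of_def)
      then show "w \<in> pes_lang E lt cf h eps"
        unfolding pes_lang_def using t mc by auto
    qed
  qed
qed

end
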